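(* Consider the one-cell system. Assume that at time $0$ the disk rotates with angular velocity $\hat\omega$ and that none of the particles which are inside the cell will collide with the disk before time $\tau>0$. Then, given any $\omega\in\mathbb{R}$ and any $0<\delta<\tau$, there exists a way to inject one particle into the cell through the left opening $\partial\Gamma_{\rm L}$ at time $0$ (with a suitable injection point and inward-pointing velocity) such that at time $\delta$ the disk has angular velocity $\omega$ and the injected particle has left the cell through $\partial\Gamma_{\rm L}$. The same holds with $\partial\Gamma_{\rm R}$ in place of $\partial\Gamma_{\rm L}$.
   Context: Cell geometry. Let $\Gamma_{\rm box}\subset\mathbb{R}^2$ be a bounded connected closed domain such that $(x,y)\in\Gamma_{\rm box}$ implies $x\in[0,L]$. Its boundary is $\partial\Gamma_{\rm box}=\partial\Gamma_{\rm L}\cup\partial\Gamma_{\rm R}\cup\bigcup_{k=1}^b\partial\Gamma_k$, where $\partial\Gamma_{\rm L}=\{(0,y):y\in[-a,a]\}$ and $\partial\Gamma_{\rm R}=\{(L,y):y\in[-a,a]\}$ are the two "openings" ($a>0$), and each $\partial\Gamma_k$ is an arc of a circle $C_k$ with center $c_k$, the arcs being oriented so that $\partial\Gamma_{\rm box}$ is everywhere dispersing (the arcs bulge into the domain). In the interior of $\Gamma_{\rm box}$ lies a closed disk $D$ of center $c=(L/2,0)$ and radius $r$ with $\partial D\cap\partial\Gamma_{\rm box}=\emptyset$, and for every $z\in\partial\Gamma_{\rm box}$ the segment $[c,z]$ meets $\partial\Gamma_{\rm box}$ only at $z$. The cell is $\Gamma=\Gamma_{\rm box}\setminus D$ (with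 boundary $\partial\Gamma=\partial\Gamma_{\rm box}\cup\partial D$); its corners $\partial\Gamma^*$ are the points where two of the boundary pieces (arcs or openings) meet. Dynamics. Point particles move in straight lines with constant velocity inside $\Gamma$ and do not interact with each other. The disk has an angular position $\phi\in[0,2\pi)$ and angular velocity $\omega\in\mathbb{R}$ with $\dot\phi=\omega$ between collisions. At a point $q$ of $\partial\Gamma$ write the particle velocity as $v=v^{\rm n}e_{\rm n}+v^{\rm t}e_{\rm t}$ with $e_{\rm n}$ the outward unit normal and $e_{\rm t}$ the unit tangent. Collision rules (primes denote values after collision; positions and $\phi$ are unchanged): (1) if $q\in\partial\Gamma_{\rm L}\cup\partial\Gamma_{\rm R}$, the particle continues straight and leaves the cell; (2) if $q\in\partial\Gamma_{\rm box}\setminus(\partial\Gamma_{\rm L}\cup\partial\Gamma_{\rm R})$, then $(v^{\rm n})'=-v^{\rm n}$, $(v^{\rm t})'=v^{\rm t}$ (specular reflection); (3) if $q\in\partial D$, then $(v^{\rm n})'=-v^{\rm n}$, $(v^{\rm t})'=\omega$, $\omega'=v^{\rm t}$. Heat baths. Particles may be injected into the cell at any time through $\partial\Gamma_{\rm L}$ or $\partial\Gamma_{\rm R}$, at any point of the opening and with any velocity pointing into the cell; a realization of the injection process on a time interval is the finite collection of such injection times, points and velocities. Every open set of realizations is assumed to have positive probability. *)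

theory Defs
  imports "HOL-Analysis.Analysis"
begin

type_synonym pt = "real \<times> real"

text \<open>Geometry of one cell: length L, half-width a of the openings, radius r of the
  rotating disk, number b of circular arcs, their circle centers and radii, the arcs
  themselves, and the region Gamma_box.\<close>
record cell =
  Lc   :: real
  ac   :: real
  rc   :: real
  nb   :: nat
  cen  :: "nat \<Rightarrow> pt"
  rad  :: "nat \<Rightarrow> real"
  arcs :: "nat \<Rightarrow> pt set"
  box  :: "pt set"

definition openL :: "cell \<Rightarrow> pt set" where
  "openL C = {(0, y) | y. - ac C \<le> y \<and> y \<le> ac C}"

definition openR :: "cell \<Rightarrow> pt set" where
  "openR C = {(Lc C, y) | y. - ac C \<le> y \<and> y \<le> ac C}"

definition diskc :: "cell \<Rightarrow> pt" where
  "diskc C = (Lc C / 2, 0)"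

definition Gamma :: "cell \<Rightarrow> pt set" where
  "Gamma C = box C - ball (diskc C) (rc C)"

definition bdry :: "cell \<Rightarrow> pt set" where
  "bdry C = frontier (box C) \<union> sphere (diskc C) (rc C)"

definition is_arc :: "pt \<Rightarrow> real \<Rightarrow> pt set \<Rightarrow> bool" where
  "is_arc c \<rho> A \<longleftrightarrow> (\<exists>\<theta>0 \<theta>1. \<theta>0 < \<theta>1 \<and> \<theta>1 - \<theta>0 < 2 * pi \<and>
      A = (\<lambda>\<theta>. c + \<rho> *\<^sub>R (cos \<theta>, sin \<theta>)) ` {\<theta>0..\<theta>1})"

definition cell_ok :: "cell \<Rightarrow> bool" where
  "cell_ok C \<longleftrightarrow>
     Lc C > 0 \<and> ac C > 0 \<and> rc C > 0 \<and>
     closed (box C) \<and> bounded (box C) \<and> connected (box C) \<and>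
     box C = closure (interior (box C)) \<and>
     (\<forall>x y. (x, y) \<in> box C \<longrightarrow> 0 \<le> x \<and> x \<le> Lc C) \<and>
     frontier (box C) = openL C \<union> openR C \<union> (\<Union>k<nb C. arcs C k) \<and>
     (\<forall>k<nb C. rad C k > 0 \<and> is_arc (cen C k) (rad C k) (arcs C k) \<and>
        \<comment> \<open>dispersing: near each point of the arc the domain lies outside the circle C_k\<close>
        (\<forall>z\<in>arcs C k. \<exists>e>0. box C \<inter> ball z e \<inter> ball (cen C k) (rad C k) = {})) \<and>
     cball (diskc C) (rc C) \<subseteq> interior (box C) \<and>
     (\<forall>z\<in>frontier (box C). closed_segment (diskc C) z \<inter> frontier (box C) = {z})"

definition next_hit :: "cell \<Rightarrow> pt \<Rightarrow> pt \<Rightarrow> real \<Rightarrow> bool" where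
  "next_hit C q v s \<longleftrightarrow> s > 0 \<and> q + s *\<^sub>R v \<in> bdry C \<and>
     (\<forall>u. 0 < u \<and> u < s \<longrightarrow> q + u *\<^sub>R v \<in> Gamma C - bdry C)"

datatype side = Lft | Rgt

text \<open>Result: the particle leaves through an opening (Inl side), or new velocity and new
  angular velocity (Inr (v', w')); None at corners where the rules are undefined.
  At the disk, e_n = (c - x)/r is the outward normal of the cell and e_t is e_n rotated
  by +90 degrees.\<close>
definition collide :: "cell \<Rightarrow> pt \<Rightarrow> pt \<Rightarrow> real \<Rightarrow> (side + pt \<times> real) option" where
  "collide C x v w =
    (if x \<in> openL C then Some (Inl Lft)
     else if x \<in> openR C then Some (Inl Rgt)
     else if x \<in> sphere (diskc C) (rc C) then
       (let en = (1 / rc C) *\<^sub>R (diskc C - x); et = (- snd en, fst en) in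
          Some (Inr ((- (v \<bullet> en)) *\<^sub>R en + w *\<^sub>R et, v \<bullet> et)))
     else if (\<exists>!k. k < nb C \<and> x \<in> arcs C k) then
       (let k = (THE k. k < nb C \<and> x \<in> arcs C k);
            n = (1 / rad C k) *\<^sub>R (x - cen C k) in
          Some (Inr (v - (2 * (v \<bullet> n)) *\<^sub>R n, w)))
     else None)"

text \<open>State of a particle: In q v t0 (at time t0, just after its last collision or
  injection, it was at q with velocity v), or Out s t (it left through opening s at time t).\<close>
datatype pstate = In pt pt real | Out side real

text \<open>System state: (time of last event, angular velocity of the disk, particles).\<close>
type_synonym sys = "real \<times> real \<times> pstate list"

inductive step :: "cell \<Rightarrow> sys \<Rightarrow> sys \<Rightarrow> bool" for C where
  exit: "\<lbrakk> i < length ps; ps ! i = In q v t0; next_hit C q v s; t' = t0 + s;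
          \<forall>j<length ps. \<forall>q' v' t0' s'. ps ! j = In q' v' t0' \<longrightarrow> next_hit C q' v' s' \<longrightarrow> t' \<le> t0' + s';
          collide C (q + s *\<^sub>R v) v w = Some (Inl sd) \<rbrakk>
        \<Longrightarrow> step C (t, w, ps) (t', w, ps[i := Out sd t'])"
| bounce: "\<lbrakk> i < length ps; ps ! i = In q v t0; next_hit C q v s; t' = t0 + s;
          \<forall>j<length ps. \<forall>q' v' t0' s'. ps ! j = In q' v' t0' \<longrightarrow> next_hit C q' v' s' \<longrightarrow> t' \<le> t0' + s';
          collide C (q + s *\<^sub>R v) v w = Some (Inr (vn, wn)) \<rbrakk>
        \<Longrightarrow> step C (t, w, ps) (t', wn, ps[i := In (q + s *\<^sub>R v) vn t'])"

definition at_time :: "cell \<Rightarrow> real \<Rightarrow> sys \<Rightarrow> bool" where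
  "at_time C T S \<longleftrightarrow> fst S \<le> T \<and>
     (\<forall>p\<in>set (snd (snd S)). \<forall>q v t0 s. p = In q v t0 \<longrightarrow> next_hit C q v s \<longrightarrow> T < t0 + s)"

definition init_sys :: "real \<Rightarrow> (pt \<times> pt) list \<Rightarrow> sys" where
  "init_sys w P = (0, w, map (\<lambda>(q, v). In q v 0) P)"

definition no_disk_hit_before :: "cell \<Rightarrow> real \<Rightarrow> sys \<Rightarrow> bool" where
  "no_disk_hit_before C \<tau> S0 \<longleftrightarrow>
     (\<forall>S. (step C)\<^sup>*\<^sup>* S0 S \<longrightarrow>
        (\<forall>p\<in>set (snd (snd S)). \<forall>q v t0. p = In q v t0 \<longrightarrow> q \<in> sphere (diskc C) (rc C) \<longrightarrow> \<tau> \<le> t0))"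

definition injection_works ::
  "cell \<Rightarrow> real \<Rightarrow> (pt \<times> pt) list \<Rightarrow> pt \<Rightarrow> pt \<Rightarrow> real \<Rightarrow> real \<Rightarrow> side \<Rightarrow> bool" where
  "injection_works C w P q0 v0 T w1 sd \<longleftrightarrow>
     (let S0 = init_sys w ((q0, v0) # P) in
       (\<exists>S. (step C)\<^sup>*\<^sup>* S0 S \<and> at_time C T S) \<and>
       (\<forall>S. (step C)\<^sup>*\<^sup>* S0 S \<longrightarrow> at_time C T S \<longrightarrow>
            fst (snd S) = w1 \<and> (\<exists>t'. hd (snd (snd S)) = Out sd t')))"

end

theory Submission
  imports Defs
begin

lemma next_hit_unique:
  assumes "next_hit C q v s" "next_hit C q v s'" shows "s = s'"
proof (rule ccontr)
  assume "s \<noteq> s'"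
  then consider "s < s'" | "s' < s" by linarith
  then show False
  proof cases
    case 1 then show ?thesis using assms unfolding next_hit_def by auto
  next
    case 2 then show ?thesis using assms unfolding next_hit_def by auto
  qed
qed

definition mono_sys :: "cell \<Rightarrow> sys \<Rightarrow> bool" where
  "mono_sys C S \<longleftrightarrow> (\<forall>p\<in>set (snd (snd S)). \<forall>q v t0 s. p = In q v t0 \<longrightarrow> next_hit C q v s \<longrightarrow> fst S \<le> t0 + s)"

lemma step_mono:
  assumes "step C S S'" "mono_sys C S"
  shows "mono_sys C S' \<and> fst S \<le> fst S'"
  using assms(1)
proof cases
  case (exit i ps q v t0 s t' w sd t)
  have le: "t \<le> t'"
  proof -
    have m: "ps ! i \<in> set ps" using exit(3) by (rule nth_mem)
    have "\<forall>p\<in>set ps. \<forall>q v t0 s. p = In q v t0 \<longrightarrow> next_hit C q v s \<longrightarrow> t \<le> t0 + s"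
      using assms(2) exit unfolding mono_sys_def by simp
    then show ?thesis using m exit by blast
  qed
  have "mono_sys C S'"
    unfolding mono_sys_def
  proof (intro ballI allI impI)
    fix p q1 v1 t1 s1 assume p: "p \<in> set (snd (snd S'))" and h: "p = In q1 v1 t1" "next_hit C q1 v1 s1"
    then have "p \<in> insert (Out sd t') (set ps)" using exit set_update_subset_insert by fastforce
    then have "p \<in> set ps" using h by auto
    then obtain j where "j < length ps" "ps ! j = p" by (auto simp: in_set_conv_nth)
    then have "t' \<le> t1 + s1" using exit(7) h by blast
    then show "fst S' \<le> t1 + s1" using exit(2,6) by simp
  qed
  then show ?thesis using le exit by simp
next
  case (bounce i ps q v t0 s t' w vn wn t)
  have le: "t \<le> t'"
  proof -
    have m: "ps ! i \<in> set ps" using bounce(3) by (rule nth_mem)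
    have "\<forall>p\<in>set ps. \<forall>q v t0 s. p = In q v t0 \<longrightarrow> next_hit C q v s \<longrightarrow> t \<le> t0 + s"
      using assms(2) bounce unfolding mono_sys_def by simp
    then show ?thesis using m bounce by blast
  qed
  have "mono_sys C S'"
    unfolding mono_sys_def
  proof (intro ballI allI impI)
    fix p q1 v1 t1 s1 assume p: "p \<in> set (snd (snd S'))" and h: "p = In q1 v1 t1" "next_hit C q1 v1 s1"
    then have "p \<in> insert (In (q + s *\<^sub>R v) vn t') (set ps)" using bounce set_update_subset_insert by fastforce
    then consider "p = In (q + s *\<^sub>R v) vn t'" | "p \<in> set ps" by auto
    then show "fst S' \<le> t1 + s1"
    proof cases
      case 1 then show ?thesis using h bounce unfolding next_hit_def by auto
    next
      case 2
      then obtain j where "j < length ps" "ps ! j = p" by (auto simp: in_set_conv_nth)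
      then have "t' \<le> t1 + s1" using bounce(7) h by blast
      then show ?thesis using bounce(2,6) by simp
    qed
  qed
  then show ?thesis using le bounce by simp
qed

lemma steps_mono:
  assumes "(step C)\<^sup>*\<^sup>* S S'" "mono_sys C S"
  shows "mono_sys C S' \<and> fst S \<le> fst S'"
  using assms
proof (induction rule: rtranclp_induct)
  case base then show ?case by simp
next
  case (step y z)
  have a: "mono_sys C y" "fst S \<le> fst y" using step.IH step.prems by auto
  have b: "mono_sys C z \<and> fst y \<le> fst z" by (rule step_mono[OF step.hyps(2) a(1)])
  show ?case using a b by linarith
qed

lemma init_mono: "mono_sys C (init_sys w P)"
  unfolding mono_sys_def init_sys_def next_hit_def by auto

lemma reach_mono: "(step C)\<^sup>*\<^sup>* (init_sys w P) S \<Longrightarrow> mono_sys C S"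
  using steps_mono[OF _ init_mono] by blast

lemma reach_time: "(step C)\<^sup>*\<^sup>* (init_sys w P) S \<Longrightarrow> step C S S' \<Longrightarrow> fst S \<le> fst S'"
  using step_mono[OF _ reach_mono] by blast

lemma collide_Inl: "collide C x v w = Some (Inl sd) \<Longrightarrow> collide C x v w' = Some (Inl sd)"
  by (auto simp: collide_def Let_def split: if_splits)

lemma collide_Inr_nosph: "collide C x v w = Some (Inr (vn, wn)) \<Longrightarrow> x \<notin> sphere (diskc C) (rc C) \<Longrightarrow>
   wn = w \<and> collide C x v w' = Some (Inr (vn, w'))"
  by (auto simp: collide_def Let_def split: if_splits)

lemma collide_Inr_ex: "collide C x v w = Some (Inr (vn, wn)) \<Longrightarrow> \<exists>vn' wn'. collide C x v w' = Some (Inr (vn', wn'))"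
  by (auto simp: collide_def Let_def split: if_splits)

context
  fixes C :: cell and P :: "(pt \<times> pt) list" and wh om \<delta> \<tau> s1 s2 :: real
    and q0 v0 x v1 :: pt and sd :: side
  assumes nh1: "next_hit C q0 v0 s1" and hx: "q0 + s1 *\<^sub>R v0 = x"
    and col1: "collide C x v0 wh = Some (Inr (v1, om))"
    and nh2: "next_hit C x v1 s2" and col2: "collide C (x + s2 *\<^sub>R v1) v1 om = Some (Inl sd)"
    and tim: "s1 + s2 < \<delta>" and dt: "\<delta> < \<tau>"
    and nohit: "no_disk_hit_before C \<tau> (init_sys wh P)"
begin

definition ph :: "pstate \<Rightarrow> real \<Rightarrow> bool" where
  "ph p w \<longleftrightarrow> (p = In q0 v0 0 \<and> w = wh) \<or> (p = In x v1 s1 \<and> w = om) \<or> (p = Out sd (s1 + s2) \<and> w = om)"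

lemma s1pos: "s1 > 0" using nh1 unfolding next_hit_def by simp
lemma s2pos: "s2 > 0" using nh2 unfolding next_hit_def by simp

lemma N0_eq: "init_sys wh ((q0, v0) # P) = (0, wh, In q0 v0 0 # snd (snd (init_sys wh P)))"
  by (simp add: init_sys_def)

lemma old_bad:
  assumes "(step C)\<^sup>*\<^sup>* (init_sys wh P) (to, wh, ps)" "j < length ps" "ps ! j = In q v t0"
    "next_hit C q v s" "t' = t0 + s"
    "\<forall>k<length ps. \<forall>q' v' t0' s'. ps ! k = In q' v' t0' \<longrightarrow> next_hit C q' v' s' \<longrightarrow> t' \<le> t0' + s'"
    "q + s *\<^sub>R v \<in> sphere (diskc C) (rc C)"
    "collide C (q + s *\<^sub>R v) v wh = Some (Inr (vn', wn'))"
  shows "\<tau> \<le> t'"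
proof -
  have st: "step C (to, wh, ps) (t', wn', ps[j := In (q + s *\<^sub>R v) vn' t'])"
    by (rule step.bounce[OF assms(2,3,4,5,6,8)])
  have r: "(step C)\<^sup>*\<^sup>* (init_sys wh P) (t', wn', ps[j := In (q + s *\<^sub>R v) vn' t'])"
    using assms(1) st by (rule rtranclp.rtrancl_into_rtrancl)
  have m: "In (q + s *\<^sub>R v) vn' t' \<in> set (ps[j := In (q + s *\<^sub>R v) vn' t'])"
    using assms(2) by (simp add: set_update_memI)
  have "\<forall>p\<in>set (snd (snd (t', wn', ps[j := In (q + s *\<^sub>R v) vn' t']))). \<forall>q v t0. p = In q v t0 \<longrightarrow> q \<in> sphere (diskc C) (rc C) \<longrightarrow> \<tau> \<le> t0"
    using nohit r unfolding no_disk_hit_before_def by blast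
  then show ?thesis using m assms(7) by (simp only: snd_conv)
qed

lemma fwd:
  assumes "(step C)\<^sup>*\<^sup>* (init_sys wh ((q0, v0) # P)) N" "fst N \<le> \<delta>"
  shows "\<exists>t w p ps to. N = (t, w, p # ps) \<and> ph p w \<and> (step C)\<^sup>*\<^sup>* (init_sys wh P) (to, wh, ps)"
  using assms
proof (induction rule: rtranclp_induct)
  case base
  show ?case
    by (rule exI[of _ 0], rule exI[of _ wh], rule exI[of _ "In q0 v0 0"],
        rule exI[of _ "snd (snd (init_sys wh P))"], rule exI[of _ 0])
       (simp add: ph_def init_sys_def)
next
  case (step Nm N')
  have "fst Nm \<le> fst N'" using reach_time[OF step.hyps(1,2)] .
  then have "fst Nm \<le> \<delta>" using step.prems by simp
  then obtain t w p ps to where Nm: "Nm = (t, w, p # ps)" and php: "ph p w"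
    and old: "(step C)\<^sup>*\<^sup>* (init_sys wh P) (to, wh, ps)"
    using step.IH[OF \<open>fst Nm \<le> \<delta>\<close>] by (elim exE conjE) blast
  from step.hyps(2)[unfolded Nm] show ?case
  proof cases
    case (exit i q v t0 s t' sd')
    show ?thesis
    proof (cases i)
      case 0
      then have pe: "p = In q v t0" using exit by simp
      from php[unfolded ph_def] show ?thesis
      proof (elim disjE conjE)
        assume "p = In q0 v0 0" "w = wh"
        then have "next_hit C q0 v0 s" using pe exit(4) by simp
        then have "s = s1" using next_hit_unique[OF nh1] by simp
        then show ?thesis using exit pe \<open>p = In q0 v0 0\<close> \<open>w = wh\<close> col1 hx by simp
      next
        assume a: "p = In x v1 s1" "w = om"
        then have "next_hit C x v1 s" using pe exit(4) by simp
        then have "s = s2" using next_hit_unique[OF nh2] by simp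
        then have "sd' = sd" using exit pe a col2 by simp
        then have "N' = (s1 + s2, om, Out sd (s1 + s2) # ps)" using exit pe a \<open>s = s2\<close> 0 by simp
        then show ?thesis using old unfolding ph_def by blast
      next
        assume "p = Out sd (s1 + s2)" then show ?thesis using pe by simp
      qed
    next
      case (Suc j)
      have j: "j < length ps" "ps ! j = In q v t0" using exit Suc by auto
      have minold: "\<forall>k<length ps. \<forall>q' v' t0' s'. ps ! k = In q' v' t0' \<longrightarrow> next_hit C q' v' s' \<longrightarrow> t' \<le> t0' + s'"
      proof (intro allI impI)
        fix k q' v' t0' s' assume "k < length ps" "ps ! k = In q' v' t0'" "next_hit C q' v' s'"
        then show "t' \<le> t0' + s'" using exit(6)[rule_format, of "Suc k" q' v' t0' s'] by simp
      qed
      have st: "step C (to, wh, ps) (t', wh, ps[j := Out sd' t'])"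
        by (rule step.exit[OF j exit(4,5) minold collide_Inl[OF exit(7)]])
      have "(step C)\<^sup>*\<^sup>* (init_sys wh P) (t', wh, ps[j := Out sd' t'])"
        using old st by (rule rtranclp.rtrancl_into_rtrancl)
      moreover have "N' = (t', w, p # ps[j := Out sd' t'])" using exit(1) Suc by simp
      ultimately show ?thesis using php by blast
    qed
  next
    case (bounce i q v t0 s t' vn wn)
    show ?thesis
    proof (cases i)
      case 0
      then have pe: "p = In q v t0" using bounce by simp
      from php[unfolded ph_def] show ?thesis
      proof (elim disjE conjE)
        assume a: "p = In q0 v0 0" "w = wh"
        then have "next_hit C q0 v0 s" using pe bounce(4) by simp
        then have "s = s1" using next_hit_unique[OF nh1] by simp
        then have "vn = v1" "wn = om" using bounce pe a col1 hx by auto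
        then have "N' = (s1, om, In x v1 s1 # ps)" using bounce pe a \<open>s = s1\<close> 0 hx by simp
        then show ?thesis using old unfolding ph_def by blast
      next
        assume a: "p = In x v1 s1" "w = om"
        then have "next_hit C x v1 s" using pe bounce(4) by simp
        then have "s = s2" using next_hit_unique[OF nh2] by simp
        then show ?thesis using bounce pe a col2 by simp
      next
        assume "p = Out sd (s1 + s2)" then show ?thesis using pe by simp
      qed
    next
      case (Suc j)
      have j: "j < length ps" "ps ! j = In q v t0" using bounce Suc by auto
      have minold: "\<forall>k<length ps. \<forall>q' v' t0' s'. ps ! k = In q' v' t0' \<longrightarrow> next_hit C q' v' s' \<longrightarrow> t' \<le> t0' + s'"
      proof (intro allI impI)
        fix k q' v' t0' s' assume "k < length ps" "ps ! k = In q' v' t0'" "next_hit C q' v' s'"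
        then show "t' \<le> t0' + s'" using bounce(6)[rule_format, of "Suc k" q' v' t0' s'] by simp
      qed
      show ?thesis
      proof (cases "q + s *\<^sub>R v \<in> sphere (diskc C) (rc C)")
        case True
        obtain vn' wn' where c: "collide C (q + s *\<^sub>R v) v wh = Some (Inr (vn', wn'))"
          using collide_Inr_ex[OF bounce(7)] by blast
        have "\<tau> \<le> t'" by (rule old_bad[OF old j bounce(4,5) minold True c])
        then show ?thesis using step.prems bounce dt by simp
      next
        case False
        have c: "wn = w" "collide C (q + s *\<^sub>R v) v wh = Some (Inr (vn, wh))"
          using collide_Inr_nosph[OF bounce(7) False] by auto
        have st: "step C (to, wh, ps) (t', wh, ps[j := In (q + s *\<^sub>R v) vn t'])"
          by (rule step.bounce[OF j bounce(4,5) minold c(2)])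
        have "(step C)\<^sup>*\<^sup>* (init_sys wh P) (t', wh, ps[j := In (q + s *\<^sub>R v) vn t'])"
          using old st by (rule rtranclp.rtrancl_into_rtrancl)
        moreover have "N' = (t', w, p # ps[j := In (q + s *\<^sub>R v) vn t'])" using bounce(1) Suc c by simp
        ultimately show ?thesis using php by blast
      qed
    qed
  qed
qed

lemma adv1:
  assumes "\<forall>j<length ps. \<forall>q v t0 s. ps ! j = In q v t0 \<longrightarrow> next_hit C q v s \<longrightarrow> s1 \<le> t0 + s"
  shows "step C (tN, wh, In q0 v0 0 # ps) (s1, om, In x v1 s1 # ps)"
proof -
  have mn: "\<forall>j<length (In q0 v0 0 # ps). \<forall>q' v' t0' s'. (In q0 v0 0 # ps) ! j = In q' v' t0' \<longrightarrow> next_hit C q' v' s' \<longrightarrow> s1 \<le> t0' + s'"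
  proof (intro allI impI)
    fix j q' v' t0' s' assume j: "j < length (In q0 v0 0 # ps)" "(In q0 v0 0 # ps) ! j = In q' v' t0'" "next_hit C q' v' s'"
    show "s1 \<le> t0' + s'"
    proof (cases j)
      case 0
      then have "next_hit C q0 v0 s'" "t0' = 0" using j by auto
      then show ?thesis using next_hit_unique[OF nh1] by simp
    next
      case (Suc k)
      then have "k < length ps" "ps ! k = In q' v' t0'" using j by auto
      then show ?thesis using assms j(3) by blast
    qed
  qed
  have c: "collide C (q0 + s1 *\<^sub>R v0) v0 wh = Some (Inr (v1, om))" using col1 hx by simp
  have "step C (tN, wh, In q0 v0 0 # ps) (s1, om, (In q0 v0 0 # ps)[0 := In (q0 + s1 *\<^sub>R v0) v1 s1])"
    by (rule step.bounce[OF _ _ nh1 _ mn c]) simp_all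
  then show ?thesis using hx by simp
qed

lemma adv2:
  assumes "\<forall>j<length ps. \<forall>q v t0 s. ps ! j = In q v t0 \<longrightarrow> next_hit C q v s \<longrightarrow> s1 + s2 \<le> t0 + s"
  shows "step C (tN, om, In x v1 s1 # ps) (s1 + s2, om, Out sd (s1 + s2) # ps)"
proof -
  have mn: "\<forall>j<length (In x v1 s1 # ps). \<forall>q' v' t0' s'. (In x v1 s1 # ps) ! j = In q' v' t0' \<longrightarrow> next_hit C q' v' s' \<longrightarrow> s1 + s2 \<le> t0' + s'"
  proof (intro allI impI)
    fix j q' v' t0' s' assume j: "j < length (In x v1 s1 # ps)" "(In x v1 s1 # ps) ! j = In q' v' t0'" "next_hit C q' v' s'"
    show "s1 + s2 \<le> t0' + s'"
    proof (cases j)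
      case 0
      then have "next_hit C x v1 s'" "t0' = s1" using j by auto
      then show ?thesis using next_hit_unique[OF nh2] by simp
    next
      case (Suc k)
      then have "k < length ps" "ps ! k = In q' v' t0'" using j by auto
      then show ?thesis using assms j(3) by blast
    qed
  qed
  have "step C (tN, om, In x v1 s1 # ps) (s1 + s2, om, (In x v1 s1 # ps)[0 := Out sd (s1 + s2)])"
    by (rule step.exit[OF _ _ nh2 _ mn col2]) simp_all
  then show ?thesis by simp
qed

lemma advance:
  assumes r: "(step C)\<^sup>*\<^sup>* (init_sys wh ((q0, v0) # P)) (tN, w, p # ps)" and php: "ph p w"
    and pend: "\<forall>j<length ps. \<forall>q v t0 s. ps ! j = In q v t0 \<longrightarrow> next_hit C q v s \<longrightarrow> T \<le> t0 + s"
    and tN: "tN \<le> \<delta>"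
  shows "\<exists>tN' w' p'. (step C)\<^sup>*\<^sup>* (init_sys wh ((q0, v0) # P)) (tN', w', p' # ps) \<and> ph p' w' \<and> tN' \<le> \<delta>
     \<and> (\<forall>q v t0 s. p' = In q v t0 \<longrightarrow> next_hit C q v s \<longrightarrow> T \<le> t0 + s)"
proof -
  have pend_le: "\<forall>j<length ps. \<forall>q v t0 s. ps ! j = In q v t0 \<longrightarrow> next_hit C q v s \<longrightarrow> T' \<le> t0 + s" if "T' < T" for T'
    using pend that by (meson less_imp_le order_trans)
  have from1: "\<exists>tN' w' p'. (step C)\<^sup>*\<^sup>* (init_sys wh ((q0, v0) # P)) (tN', w', p' # ps) \<and> ph p' w' \<and> tN' \<le> \<delta>
     \<and> (\<forall>q v t0 s. p' = In q v t0 \<longrightarrow> next_hit C q v s \<longrightarrow> T \<le> t0 + s)"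
    if r1: "(step C)\<^sup>*\<^sup>* (init_sys wh ((q0, v0) # P)) (tM, om, In x v1 s1 # ps)" and tM: "tM \<le> \<delta>" for tM
  proof (cases "T \<le> s1 + s2")
    case True
    have "\<forall>q v t0 s. In x v1 s1 = In q v t0 \<longrightarrow> next_hit C q v s \<longrightarrow> T \<le> t0 + s"
      using True next_hit_unique[OF nh2] by auto
    then show ?thesis using r1 tM unfolding ph_def by blast
  next
    case False
    have "step C (tM, om, In x v1 s1 # ps) (s1 + s2, om, Out sd (s1 + s2) # ps)"
      by (rule adv2) (use pend_le[of "s1 + s2"] False in simp)
    then have "(step C)\<^sup>*\<^sup>* (init_sys wh ((q0, v0) # P)) (s1 + s2, om, Out sd (s1 + s2) # ps)"
      using r1 by (rule rtranclp.rtrancl_into_rtrancl[rotated])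
    then show ?thesis using tim s1pos s2pos unfolding ph_def by (intro exI[of _ "s1 + s2"] exI[of _ om] exI[of _ "Out sd (s1 + s2)"]) auto
  qed
  from php[unfolded ph_def] show ?thesis
  proof (elim disjE conjE)
    assume a: "p = In q0 v0 0" "w = wh"
    show ?thesis
    proof (cases "T \<le> s1")
      case True
      have "\<forall>q v t0 s. In q0 v0 0 = In q v t0 \<longrightarrow> next_hit C q v s \<longrightarrow> T \<le> t0 + s"
        using True next_hit_unique[OF nh1] by auto
      then show ?thesis using r tN a php by blast
    next
      case False
      have "step C (tN, wh, In q0 v0 0 # ps) (s1, om, In x v1 s1 # ps)"
        by (rule adv1) (use pend_le[of "s1"] False in simp)
      then have "(step C)\<^sup>*\<^sup>* (init_sys wh ((q0, v0) # P)) (s1, om, In x v1 s1 # ps)"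
        using r a by (metis rtranclp.rtrancl_into_rtrancl)
      then show ?thesis using from1 tim s2pos by simp
    qed
  next
    assume a: "p = In x v1 s1" "w = om"
    show ?thesis using from1[of tN] r a tN by simp
  next
    assume a: "p = Out sd (s1 + s2)" "w = om"
    show ?thesis using r a tN php by blast
  qed
qed

lemma exist_lift:
  assumes "(step C)\<^sup>*\<^sup>* (init_sys wh P) S" "fst S \<le> \<delta>"
  shows "fst (snd S) = wh \<and> (\<exists>tN w p. (step C)\<^sup>*\<^sup>* (init_sys wh ((q0, v0) # P)) (tN, w, p # snd (snd S)) \<and> ph p w \<and> tN \<le> \<delta>)"
  using assms
proof (induction rule: rtranclp_induct)
  case base
  have "(step C)\<^sup>*\<^sup>* (init_sys wh ((q0, v0) # P)) (0, wh, In q0 v0 0 # snd (snd (init_sys wh P)))"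
    by (simp add: init_sys_def)
  moreover have "ph (In q0 v0 0) wh" by (simp add: ph_def)
  moreover have "(0::real) \<le> \<delta>" using tim s1pos s2pos by simp
  ultimately show ?case by (auto simp: init_sys_def)
next
  case (step S S')
  have "fst S \<le> fst S'" using reach_time[OF step.hyps(1,2)] .
  then have "fst S \<le> \<delta>" using step.prems by simp
  then have IH: "fst (snd S) = wh" "\<exists>tN w p. (step C)\<^sup>*\<^sup>* (init_sys wh ((q0, v0) # P)) (tN, w, p # snd (snd S)) \<and> ph p w \<and> tN \<le> \<delta>"
    using step.IH by auto
  obtain t ps where S: "S = (t, wh, ps)" using IH(1) by (cases S) auto
  obtain tN w p where N: "(step C)\<^sup>*\<^sup>* (init_sys wh ((q0, v0) # P)) (tN, w, p # ps)" "ph p w" "tN \<le> \<delta>"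
    using IH(2) S by auto
  have old: "(step C)\<^sup>*\<^sup>* (init_sys wh P) (t, wh, ps)" using step.hyps(1) S by simp
  from step.hyps(2)[unfolded S] show ?case
  proof cases
    case (exit i q v t0 s t' sd')
    obtain tN' w' p' where A: "(step C)\<^sup>*\<^sup>* (init_sys wh ((q0, v0) # P)) (tN', w', p' # ps)" "ph p' w'" "tN' \<le> \<delta>"
      "\<forall>q v t0 s. p' = In q v t0 \<longrightarrow> next_hit C q v s \<longrightarrow> t' \<le> t0 + s"
      using advance[OF N(1,2) exit(6) N(3)] by blast
    have mn: "\<forall>j<length (p' # ps). \<forall>q' v' t0' s'. (p' # ps) ! j = In q' v' t0' \<longrightarrow> next_hit C q' v' s' \<longrightarrow> t' \<le> t0' + s'"
    proof (intro allI impI)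
      fix j q' v' t0' s' assume j: "j < length (p' # ps)" "(p' # ps) ! j = In q' v' t0'" "next_hit C q' v' s'"
      show "t' \<le> t0' + s'"
      proof (cases j)
        case 0 then show ?thesis using j A(4) by (metis nth_Cons_0)
      next
        case (Suc k)
        then have "k < length ps" "ps ! k = In q' v' t0'" using j by auto
        then show ?thesis using exit(6) j(3) by blast
      qed
    qed
    have "step C (tN', w', p' # ps) (t', w', (p' # ps)[Suc i := Out sd' t'])"
      by (rule step.exit[OF _ _ exit(4,5) mn collide_Inl[OF exit(7)]]) (use exit in simp_all)
    then have "(step C)\<^sup>*\<^sup>* (init_sys wh ((q0, v0) # P)) (t', w', p' # ps[i := Out sd' t'])"
      using A(1) by (metis rtranclp.rtrancl_into_rtrancl list_update_code(3))
    moreover have "t' \<le> \<delta>" using step.prems exit(1) by simp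
    ultimately show ?thesis using exit(1) A(2) by auto
  next
    case (bounce i q v t0 s t' vn wn)
    show ?thesis
    proof (cases "q + s *\<^sub>R v \<in> sphere (diskc C) (rc C)")
      case True
      have "\<tau> \<le> t'" by (rule old_bad[OF old bounce(2,3,4,5,6) True bounce(7)])
      then show ?thesis using step.prems bounce(1) dt by simp
    next
      case False
      have c: "wn = wh" "collide C (q + s *\<^sub>R v) v w' = Some (Inr (vn, w'))" for w'
        using collide_Inr_nosph[OF bounce(7) False] by auto
      obtain tN' w' p' where A: "(step C)\<^sup>*\<^sup>* (init_sys wh ((q0, v0) # P)) (tN', w', p' # ps)" "ph p' w'" "tN' \<le> \<delta>"
        "\<forall>q v t0 s. p' = In q v t0 \<longrightarrow> next_hit C q v s \<longrightarrow> t' \<le> t0 + s"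
        using advance[OF N(1,2) bounce(6) N(3)] by blast
      have mn: "\<forall>j<length (p' # ps). \<forall>q' v' t0' s'. (p' # ps) ! j = In q' v' t0' \<longrightarrow> next_hit C q' v' s' \<longrightarrow> t' \<le> t0' + s'"
      proof (intro allI impI)
        fix j q' v' t0' s' assume j: "j < length (p' # ps)" "(p' # ps) ! j = In q' v' t0'" "next_hit C q' v' s'"
        show "t' \<le> t0' + s'"
        proof (cases j)
          case 0 then show ?thesis using j A(4) by (metis nth_Cons_0)
        next
          case (Suc k)
          then have "k < length ps" "ps ! k = In q' v' t0'" using j by auto
          then show ?thesis using bounce(6) j(3) by blast
        qed
      qed
      have "step C (tN', w', p' # ps) (t', w', (p' # ps)[Suc i := In (q + s *\<^sub>R v) vn t'])"
        by (rule step.bounce[OF _ _ bounce(4,5) mn c(2)]) (use bounce in simp_all)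
      then have "(step C)\<^sup>*\<^sup>* (init_sys wh ((q0, v0) # P)) (t', w', p' # ps[i := In (q + s *\<^sub>R v) vn t'])"
        using A(1) by (metis rtranclp.rtrancl_into_rtrancl list_update_code(3))
      moreover have "t' \<le> \<delta>" using step.prems bounce(1) by simp
      ultimately show ?thesis using bounce(1) A(2) c(1) by auto
    qed
  qed
qed

lemma injection_ok: 
  assumes defined: "\<exists>S. (step C)\<^sup>*\<^sup>* (init_sys wh P) S \<and> at_time C \<delta> S"
  shows "injection_works C wh P q0 v0 \<delta> om sd"
  unfolding injection_works_def Let_def
proof (rule conjI)
  obtain S where S: "(step C)\<^sup>*\<^sup>* (init_sys wh P) S" "at_time C \<delta> S" using defined by blast
  obtain t w0 ps where Se: "S = (t, w0, ps)" by (cases S) auto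
  have tS: "fst S \<le> \<delta>" using S(2) unfolding at_time_def by simp
  obtain tN w p where N: "(step C)\<^sup>*\<^sup>* (init_sys wh ((q0, v0) # P)) (tN, w, p # ps)" "ph p w" "tN \<le> \<delta>"
    using exist_lift[OF S(1) tS] Se by auto
  have pend: "\<forall>q v t0 s. pp = In q v t0 \<longrightarrow> next_hit C q v s \<longrightarrow> \<delta> < t0 + s" if "pp \<in> set ps" for pp
    using S(2) that Se unfolding at_time_def by auto
  have pend2: "\<forall>j<length ps. \<forall>q v t0 s. ps ! j = In q v t0 \<longrightarrow> next_hit C q v s \<longrightarrow> \<delta> \<le> t0 + s"
    using pend nth_mem by (metis less_imp_le)
  obtain tN' w' p' where A: "(step C)\<^sup>*\<^sup>* (init_sys wh ((q0, v0) # P)) (tN', w', p' # ps)" "ph p' w'" "tN' \<le> \<delta>"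
    "\<forall>q v t0 s. p' = In q v t0 \<longrightarrow> next_hit C q v s \<longrightarrow> \<delta> \<le> t0 + s"
    using advance[OF N(1,2) pend2 N(3)] by blast
  have p': "p' = Out sd (s1 + s2)"
  proof -
    have "p' \<noteq> In q0 v0 0"
    proof
      assume "p' = In q0 v0 0" then have "\<delta> \<le> 0 + s1" using A(4) nh1 by blast
      then show False using tim s2pos by simp
    qed
    moreover have "p' \<noteq> In x v1 s1"
    proof
      assume "p' = In x v1 s1" then have "\<delta> \<le> s1 + s2" using A(4) nh2 by blast
      then show False using tim by simp
    qed
    ultimately show ?thesis using A(2) unfolding ph_def by blast
  qed
  have "at_time C \<delta> (tN', w', p' # ps)"
    unfolding at_time_def using A(3) pend p' by auto
  then show "\<exists>S. (step C)\<^sup>*\<^sup>* (init_sys wh ((q0, v0) # P)) S \<and> at_time C \<delta> S" using A(1) by blast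
next
  show "\<forall>S. (step C)\<^sup>*\<^sup>* (init_sys wh ((q0, v0) # P)) S \<longrightarrow> at_time C \<delta> S \<longrightarrow> fst (snd S) = om \<and> (\<exists>t'. hd (snd (snd S)) = Out sd t')"
  proof (intro allI impI)
  fix S assume r: "(step C)\<^sup>*\<^sup>* (init_sys wh ((q0, v0) # P)) S" and at: "at_time C \<delta> S"
  have tS: "fst S \<le> \<delta>" using at unfolding at_time_def by simp
  obtain t w p ps to where Se: "S = (t, w, p # ps)" and php: "ph p w"
    using fwd[OF r tS] by blast
  have pend: "\<forall>q v t0 s. p = In q v t0 \<longrightarrow> next_hit C q v s \<longrightarrow> \<delta> < t0 + s"
    using at Se unfolding at_time_def by auto
  have "p = Out sd (s1 + s2) \<and> w = om"
  proof -
    have "p \<noteq> In q0 v0 0"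
    proof
      assume "p = In q0 v0 0" then have "\<delta> < 0 + s1" using pend nh1 by blast
      then show False using tim s2pos by simp
    qed
    moreover have "p \<noteq> In x v1 s1"
    proof
      assume "p = In x v1 s1" then have "\<delta> < s1 + s2" using pend nh2 by blast
      then show False using tim by simp
    qed
    ultimately show ?thesis using php unfolding ph_def by blast
  qed
  then show "fst (snd S) = om \<and> (\<exists>t'. hd (snd (snd S)) = Out sd t')" using Se by simp
  qed
qed

end


lemma ok_part1: assumes "cell_ok C" shows "Lc C > 0"
  using assms unfolding cell_ok_def by (elim conjE) assumption

lemma ok_part2: assumes "cell_ok C" shows "ac C > 0"
  using assms unfolding cell_ok_def by (elim conjE) assumption

lemma ok_part3: assumes "cell_ok C" shows "rc C > 0"
  using assms unfolding cell_ok_def by (elim conjE) assumption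

lemma ok_part4: assumes "cell_ok C" shows "closed (box C)"
  using assms unfolding cell_ok_def by (elim conjE) assumption

lemma ok_part5: assumes "cell_ok C" shows "cball (diskc C) (rc C) \<subseteq> interior (box C)"
  using assms unfolding cell_ok_def by (elim conjE) assumption

lemma ok_part6: assumes "cell_ok C" shows "\<forall>z\<in>frontier (box C). closed_segment (diskc C) z \<inter> frontier (box C) = {z}"
  using assms unfolding cell_ok_def by (elim conjE) assumption

lemma ok_part7: assumes "cell_ok C" shows "frontier (box C) = openL C \<union> openR C \<union> (\<Union>k<nb C. arcs C k)"
  using assms unfolding cell_ok_def by (elim conjE) assumption

lemmas ok_parts = ok_part1 ok_part2 ok_part3 ok_part4 ok_part5 ok_part6 ok_part7

lemma radial:
  assumes ok: "cell_ok C" and z: "z \<in> frontier (box C)" and t: "0 \<le> t" "t < 1"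
  shows "diskc C + t *\<^sub>R (z - diskc C) \<in> interior (box C)"
proof -
  define c where "c = diskc C"
  define p where "p = c + t *\<^sub>R (z - c)"
  have cl: "closed (box C)" using ok_parts[OF ok] by simp
  have fr: "frontier (box C) = box C - interior (box C)" using cl by (simp add: frontier_def)
  have cin: "c \<in> interior (box C)"
  proof -
    have "c \<in> cball (diskc C) (rc C)" using ok_parts(3)[OF ok] unfolding c_def by simp
    then show ?thesis using ok_parts(5)[OF ok] by blast
  qed
  have seg: "closed_segment c z \<inter> frontier (box C) = {z}"
    using ok_parts(6)[OF ok] z unfolding c_def by blast
  have zc: "z \<noteq> c" using z cin fr by auto
  have pseg: "p \<in> closed_segment c z"
    unfolding in_segment p_def using t by (intro exI[of _ t]) (auto simp: algebra_simps)
  have "dist c p = t * dist c z"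
    unfolding p_def dist_norm using t by (simp add: norm_minus_commute)
  also have "\<dots> < dist c z" using t zc by simp
  finally have dlt: "dist c p < dist c z" .
  have zn: "z \<notin> closed_segment c p"
  proof
    assume "z \<in> closed_segment c p"
    then have "dist z c \<le> dist c p" using dist_in_closed_segment by blast
    then show False using dlt by (simp add: dist_commute)
  qed
  have sub: "closed_segment c p \<subseteq> closed_segment c z"
    by (rule closed_segment_subset[OF ends_in_segment(1) pseg convex_closed_segment])
  have nf: "closed_segment c p \<inter> frontier (box C) = {}"
  proof -
    have "closed_segment c p \<inter> frontier (box C) \<subseteq> closed_segment c z \<inter> frontier (box C)"
      using sub by (rule Int_mono) (rule order_refl)
    then have "closed_segment c p \<inter> frontier (box C) \<subseteq> {z}" using seg by simp
    then show ?thesis using zn by (metis IntD1 subset_singletonD insert_not_empty ex_in_conv singletonD subsetD)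
  qed
  have "closed_segment c p - box C = {}"
  proof (rule ccontr)
    assume d1: "closed_segment c p - box C \<noteq> {}"
    have d2: "closed_segment c p \<inter> box C \<noteq> {}" 
    proof -
      have "c \<in> closed_segment c p \<inter> box C" using cin interior_subset by blast
      then show ?thesis by blast
    qed
    have "closed_segment c p \<inter> frontier (box C) \<noteq> {}"
      by (rule connected_Int_frontier[OF connected_segment d2 d1])
    then show False using nf by simp
  qed
  then have "p \<in> box C" using ends_in_segment(2)[of p c] by blast
  moreover have "p \<notin> frontier (box C)" using nf ends_in_segment(2)[of p c] by blast
  ultimately show ?thesis using fr unfolding p_def c_def by blast
qed


lemma side:
  fixes C :: cell and P :: "(pt \<times> pt) list" and wh om \<delta> \<tau> e :: real
  assumes ok: "cell_ok C" and e: "e = 1 \<or> e = -1"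
    and nohit: "no_disk_hit_before C \<tau> (init_sys wh P)"
    and delta: "0 < \<delta>" "\<delta> < \<tau>"
    and defined: "\<exists>S. (step C)\<^sup>*\<^sup>* (init_sys wh P) S \<and> at_time C \<delta> S"
  shows "\<exists>q0 v0. q0 \<in> (if e = 1 then openL C else openR C) \<and> e * fst v0 > 0 \<and>
     injection_works C wh P q0 v0 \<delta> om (if e = 1 then Lft else Rgt)"
proof -
  define h where "h = Lc C / 2"
  define r where "r = rc C"
  define a where "a = ac C"
  define OP where "OP = (if e = 1 then openL C else openR C)"
  have hpos: "h > 0" using ok_parts(1)[OF ok] h_def by simp
  have rpos: "r > 0" using ok_parts(3)[OF ok] r_def by simp
  have apos: "a > 0" using ok_parts(2)[OF ok] a_def by simp
  have ee: "e * e = 1" "\<bar>e\<bar> = 1" using e by auto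
  have c_eq: "diskc C = (h, 0)" by (simp add: diskc_def h_def)
  have fr: "frontier (box C) = box C - interior (box C)" using ok_parts(4)[OF ok] by (simp add: frontier_def)
  have opfr: "OP \<subseteq> frontier (box C)" using ok_parts(7)[OF ok] unfolding OP_def by auto
  have opn: "(h - e * h, y) \<in> OP" if "\<bar>y\<bar> \<le> a" for y
    using e that unfolding OP_def openL_def openR_def h_def a_def by (auto simp: abs_le_iff)
  have hr: "r < h"
  proof (rule ccontr)
    assume "\<not> r < h"
    then have "(0::real, 0::real) \<in> cball (diskc C) (rc C)" using c_eq r_def hpos by (simp add: dist_Pair_Pair)
    then have i: "(0::real, 0::real) \<in> interior (box C)" using ok_parts(5)[OF ok] by blast
    have "(0::real, 0::real) \<in> openL C" unfolding openL_def using apos a_def by auto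
    then have "(0::real, 0::real) \<in> frontier (box C)" using ok_parts(7)[OF ok] by blast
    then show False using i fr by blast
  qed
  define V where "V = (\<bar>om\<bar> + \<bar>wh\<bar>) * h / a + 2 * (h - r) / \<delta> + 1"
  have t1: "(\<bar>om\<bar> + \<bar>wh\<bar>) * h / a \<ge> 0" using hpos apos by simp
  have t2: "2 * (h - r) / \<delta> \<ge> 0" using hr delta by simp
  have Vpos: "V > 0" unfolding V_def using t1 t2 by linarith
  have Vom: "\<bar>om\<bar> * h \<le> a * V"
  proof -
    have "\<bar>om\<bar> * h / a \<le> (\<bar>om\<bar> + \<bar>wh\<bar>) * h / a" using hpos apos by (simp add: divide_right_mono mult_right_mono)
    then have "\<bar>om\<bar> * h / a \<le> V" unfolding V_def using t2 by linarith
    then show ?thesis using apos by (simp add: field_simps)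
  qed
  have Vwh: "\<bar>wh\<bar> * h \<le> a * V"
  proof -
    have "\<bar>wh\<bar> * h / a \<le> (\<bar>om\<bar> + \<bar>wh\<bar>) * h / a" using hpos apos by (simp add: divide_right_mono mult_right_mono)
    then have "\<bar>wh\<bar> * h / a \<le> V" unfolding V_def using t2 by linarith
    then show ?thesis using apos by (simp add: field_simps)
  qed
  define s where "s = (h - r) / V"
  have spos: "s > 0" unfolding s_def using hr Vpos by simp
  have sV: "s * V = h - r" unfolding s_def using Vpos by simp
  have s2: "s + s < \<delta>"
  proof -
    have "2 * (h - r) / \<delta> < V" unfolding V_def using t1 by linarith
    then have "2 * (h - r) < V * \<delta>" using delta by (simp add: field_simps)
    have "s + s = 2 * (h - r) / V" unfolding s_def by simp
    also have "\<dots> < \<delta>" using \<open>2 * (h - r) < V * \<delta>\<close> Vpos by (simp add: divide_less_eq mult.commute)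
    finally show ?thesis .
  qed
  have G: "(h - e * (r + \<sigma> * V), e * \<sigma> * \<gamma>) \<in> Gamma C - bdry C"
    if sg: "0 < \<sigma>" "\<sigma> < s" and gam: "\<bar>\<gamma>\<bar> * h \<le> a * V" for \<sigma> \<gamma>
  proof -
    define y where "y = \<sigma> * \<gamma> * h / (r + \<sigma> * V)"
    define t where "t = (r + \<sigma> * V) / h"
    have rs: "r + \<sigma> * V > 0" using rpos sg Vpos by (simp add: add_pos_pos)
    have "\<sigma> * V < s * V" using sg Vpos by simp
    then have tl: "t < 1" "0 \<le> t" unfolding t_def using sV hpos rs by (simp_all add: divide_less_eq)
    have "\<bar>y\<bar> = \<sigma> * \<bar>\<gamma>\<bar> * h / (r + \<sigma> * V)" unfolding y_def using sg hpos rs by (simp add: abs_mult)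
    also have "\<dots> \<le> \<sigma> * \<bar>\<gamma>\<bar> * h / (\<sigma> * V)"
      using sg hpos rs rpos Vpos by (intro divide_left_mono) (auto intro: mult_pos_pos)
    also have "\<dots> = \<bar>\<gamma>\<bar> * h / V" using sg by simp
    also have "\<dots> \<le> a" using gam Vpos by (simp add: divide_le_eq)
    finally have ya: "\<bar>e * y\<bar> \<le> a" using ee by (simp add: abs_mult)
    have zf: "(h - e * h, e * y) \<in> frontier (box C)" using opn[OF ya] opfr by blast
    have pt: "diskc C + t *\<^sub>R ((h - e * h, e * y) - diskc C) = (h - e * (r + \<sigma> * V), e * \<sigma> * \<gamma>)"
    proof -
      have th: "t * h = r + \<sigma> * V" unfolding t_def using hpos by simp
      have ty: "t * y = \<sigma> * \<gamma>" unfolding t_def y_def using hpos rs by simp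
      have a1: "h + t * (h - e * h - h) = h - e * (r + \<sigma> * V)"
      proof -
        have "t * (h - e * h - h) = - e * (t * h)" by (simp add: algebra_simps)
        then show ?thesis using th by simp
      qed
      have a2: "t * (e * y - 0) = e * \<sigma> * \<gamma>"
      proof -
        have "t * (e * y - 0) = e * (t * y)" by (simp add: algebra_simps)
        then show ?thesis using ty by simp
      qed
      show ?thesis unfolding c_eq using a1 a2 by simp
    qed
    have int: "(h - e * (r + \<sigma> * V), e * \<sigma> * \<gamma>) \<in> interior (box C)"
      using radial[OF ok zf tl(2) tl(1)] pt by simp
    have "dist (diskc C) (h - e * (r + \<sigma> * V), e * \<sigma> * \<gamma>) \<ge> r + \<sigma> * V"
    proof -
      have "dist (fst (diskc C)) (fst (h - e * (r + \<sigma> * V), e * \<sigma> * \<gamma>)) = r + \<sigma> * V"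
        using c_eq rs ee by (simp add: dist_real_def abs_mult)
      then show ?thesis using dist_fst_le by metis
    qed
    then have far: "dist (diskc C) (h - e * (r + \<sigma> * V), e * \<sigma> * \<gamma>) > rc C"
      using sg Vpos r_def by (smt (verit) mult_pos_pos)
    show ?thesis
      unfolding Gamma_def bdry_def using int far fr interior_subset by auto
  qed
  define x where "x = (h - e * r, 0::real)"
  define v0 where "v0 = (e * V, e * om)"
  define v1 where "v1 = (- e * V, e * wh)"
  define q0 where "q0 = (h - e * h, - e * s * om)"
  have xsph: "x \<in> sphere (diskc C) (rc C)"
    unfolding x_def c_eq r_def using ee rpos r_def by (simp add: dist_Pair_Pair abs_mult)
  have nh1: "next_hit C q0 v0 s"
    unfolding next_hit_def
  proof (intro conjI allI impI)
    show "s > 0" by (rule spos)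
    have "q0 + s *\<^sub>R v0 = x" unfolding q0_def v0_def x_def unfolding s_def using Vpos by (simp add: field_simps)
    then show "q0 + s *\<^sub>R v0 \<in> bdry C" using xsph unfolding bdry_def by simp
  next
    fix u assume u: "0 < u \<and> u < s"
    have "q0 + u *\<^sub>R v0 = (h - e * (r + (s - u) * V), e * (s - u) * (- om))"
      unfolding q0_def v0_def unfolding s_def using Vpos by (simp add: field_simps)
    then show "q0 + u *\<^sub>R v0 \<in> Gamma C - bdry C" using G[of "s - u" "- om"] u Vom by simp
  qed
  have hx: "q0 + s *\<^sub>R v0 = x" unfolding q0_def v0_def x_def unfolding s_def using Vpos by (simp add: field_simps)
  have ex: "x + s *\<^sub>R v1 = (h - e * h, e * (s * wh))" unfolding v1_def x_def unfolding s_def using Vpos by (simp add: field_simps)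
  have swh: "\<bar>e * (s * wh)\<bar> \<le> a"
  proof -
    have "\<bar>e * (s * wh)\<bar> = (h - r) * \<bar>wh\<bar> / V" using ee hr Vpos unfolding s_def by (simp add: abs_mult)
    also have "\<dots> \<le> h * \<bar>wh\<bar> / V" using rpos Vpos by (simp add: divide_right_mono mult_right_mono)
    also have "\<dots> \<le> a" using Vwh Vpos by (simp add: divide_le_eq mult.commute)
    finally show ?thesis .
  qed
  have exop: "x + s *\<^sub>R v1 \<in> OP" using ex opn[OF swh] by simp
  have nh2: "next_hit C x v1 s"
    unfolding next_hit_def
  proof (intro conjI allI impI)
    show "s > 0" by (rule spos)
    show "x + s *\<^sub>R v1 \<in> bdry C" using exop opfr unfolding bdry_def by blast
  next
    fix u assume u: "0 < u \<and> u < s"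
    have "x + u *\<^sub>R v1 = (h - e * (r + u * V), e * u * wh)"
      unfolding x_def v1_def by (simp add: algebra_simps)
    then show "x + u *\<^sub>R v1 \<in> Gamma C - bdry C" using G[of u wh] u Vwh by simp
  qed
  have xnL: "x \<notin> openL C" unfolding x_def openL_def using e hr rpos by auto
  have xnR: "x \<notin> openR C" unfolding x_def openR_def h_def using e hr rpos hpos h_def by auto
  have col1: "collide C x v0 wh = Some (Inr (v1, om))"
  proof -
    have en: "(1 / rc C) *\<^sub>R (diskc C - x) = (e, 0)" unfolding c_eq x_def using rpos r_def by simp
    show ?thesis using xnL xnR xsph unfolding collide_def Let_def en v0_def v1_def
      using ee by (simp add: algebra_simps)
  qed
  have col2: "collide C (x + s *\<^sub>R v1) v1 om = Some (Inl (if e = 1 then Lft else Rgt))"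
  proof (cases "e = 1")
    case True
    then show ?thesis using exop unfolding collide_def OP_def by simp
  next
    case False
    then have "x + s *\<^sub>R v1 \<notin> openL C" using ex e hpos unfolding openL_def by auto
    then show ?thesis using exop False unfolding collide_def OP_def by simp
  qed
  have "injection_works C wh P q0 v0 \<delta> om (if e = 1 then Lft else Rgt)"
    by (rule injection_ok[OF nh1 hx col1 nh2 col2 s2 delta(2) nohit defined])
  moreover have "q0 \<in> OP" unfolding q0_def using opn[of "- e * s * om"]
  proof -
    have "\<bar>- e * s * om\<bar> = (h - r) * \<bar>om\<bar> / V" using ee hr Vpos unfolding s_def by (simp add: abs_mult)
    also have "\<dots> \<le> h * \<bar>om\<bar> / V" using rpos Vpos by (simp add: divide_right_mono mult_right_mono)
    also have "\<dots> \<le> a" using Vom Vpos by (simp add: divide_le_eq mult.commute)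
    finally show "(h - e * h, - e * s * om) \<in> OP" using opn by blast
  qed
  moreover have "e * fst v0 > 0" unfolding v0_def using Vpos ee by (simp add: mult.assoc[symmetric])
  ultimately show ?thesis unfolding OP_def by blast
qed


theorem lemma1:
  fixes C :: cell and P :: "(pt \<times> pt) list"
    and w_hat \<tau> \<omega> \<delta> :: real
  assumes geom: "cell_ok C"
    and inside: "\<forall>(q, v)\<in>set P. q \<in> Gamma C - bdry C"
    and tau: "\<tau> > 0"
    and nohit: "no_disk_hit_before C \<tau> (init_sys w_hat P)"
    and delta: "0 < \<delta>" "\<delta> < \<tau>"
    and defined: "\<exists>S. (step C)\<^sup>*\<^sup>* (init_sys w_hat P) S \<and> at_time C \<delta> S"
  shows "(\<exists>q0 v0. q0 \<in> openL C \<and> fst v0 > 0 \<and> injection_works C w_hat P q0 v0 \<delta> \<omega> Lft) \<and>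
         (\<exists>q0 v0. q0 \<in> openR C \<and> fst v0 < 0 \<and> injection_works C w_hat P q0 v0 \<delta> \<omega> Rgt)"
proof
  show "\<exists>q0 v0. q0 \<in> openL C \<and> fst v0 > 0 \<and> injection_works C w_hat P q0 v0 \<delta> \<omega> Lft"
    using side[OF geom _ nohit delta defined, of 1 \<omega>] by simp
next
  have "\<exists>q0 v0. q0 \<in> openR C \<and> - fst v0 > 0 \<and> injection_works C w_hat P q0 v0 \<delta> \<omega> Rgt"
    using side[OF geom _ nohit delta defined, of "-1" \<omega>] by simp
  then show "\<exists>q0 v0. q0 \<in> openR C \<and> fst v0 < 0 \<and> injection_works C w_hat P q0 v0 \<delta> \<omega> Rgt"
    by auto
qed

end
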